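(* Let $\mathcal{D}=\{(X_i,B_i):i\in I\}$ be a collection of random variable/nonempty event pairs with coherent$_1$ conditional previsions $\{P(X_i\mid B_i):i\in I\}$, and let $X$ be a random variable on $\Omega$. Then there exist extended real numbers $a\le b$ such that, for an extended real number $p$, the previsions in $\mathcal{D}$ together with $P(X\mid\Omega)=p$ are coherent$_1$ if and only if $p\in[a,b]$ (the closed interval in the extended reals).
   Context: Let $\Omega$ be a nonempty set of states $\omega$; events are subsets of $\Omega$ and random variables are real-valued functions on $\Omega$. An event $B$ is identified with its indicator function. A conditional prevision $P(X\mid B)$ is an extended real number. Coherence$_1$: a collection $\{P(X_i\mid B_i):i\in I\}$ is coherent$_1$ if for every finite $\{i_1,\dots,i_n\}\subseteq I$, all real $\alpha_1,\dots,\alpha_n$ with $\alpha_j\ge 0$ whenever $P(X_{i_j}\mid B_{i_j})=+\infty$ and $\alpha_j\le 0$ whenever $P(X_{i_j}\mid B_{i_j})=-\infty$, and all real $c_1,\dots,c_n$ with $c_j=P(X_{i_j}\mid B_{i_j})$ whenever that prevision is finite, we have $\sup_\omega \sum_{j=1}^n \alpha_j B_{i_j}(\omega)[X_{i_j}(\omega)-c_j]\ge 0$. *)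

theory Defs
  imports Complex_Main "HOL-Library.Extended_Real" "HOL-Library.Indicator_Function"
begin

text \<open>States are the elements of the type 'w (so Omega = UNIV, nonempty).
  A family of conditional previsions P(X i | B i), i in I, with
  X :: 'i => 'w => real, B :: 'i => 'w set, P :: 'i => ereal.\<close>

definition coherent1 ::
  "'i set \<Rightarrow> ('i \<Rightarrow> 'w \<Rightarrow> real) \<Rightarrow> ('i \<Rightarrow> 'w set) \<Rightarrow> ('i \<Rightarrow> ereal) \<Rightarrow> bool" where
  "coherent1 I X B P \<longleftrightarrow>
     (\<forall>J (\<alpha> :: 'i \<Rightarrow> real) (c :: 'i \<Rightarrow> real).
        finite J \<and> J \<subseteq> I \<and>
        (\<forall>j\<in>J. P j = \<infinity> \<longrightarrow> \<alpha> j \<ge> 0) \<and>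
        (\<forall>j\<in>J. P j = -\<infinity> \<longrightarrow> \<alpha> j \<le> 0) \<and>
        (\<forall>j\<in>J. \<bar>P j\<bar> \<noteq> \<infinity> \<longrightarrow> ereal (c j) = P j)
        \<longrightarrow> (SUP \<omega>. ereal (\<Sum>j\<in>J. \<alpha> j * indicator (B j) \<omega> * (X j \<omega> - c j))) \<ge> 0)"

end

theory Submission
  imports Defs
begin

definition adm :: "'i set \<Rightarrow> ('i \<Rightarrow> ereal) \<Rightarrow> 'i set \<Rightarrow> ('i \<Rightarrow> real) \<Rightarrow> ('i \<Rightarrow> real) \<Rightarrow> bool" where
  "adm I P J \<alpha> c \<longleftrightarrow> finite J \<and> J \<subseteq> I \<and>
        (\<forall>j\<in>J. P j = \<infinity> \<longrightarrow> \<alpha> j \<ge> 0) \<and>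
        (\<forall>j\<in>J. P j = -\<infinity> \<longrightarrow> \<alpha> j \<le> 0) \<and>
        (\<forall>j\<in>J. \<bar>P j\<bar> \<noteq> \<infinity> \<longrightarrow> ereal (c j) = P j)"

definition gam :: "('i \<Rightarrow> 'w \<Rightarrow> real) \<Rightarrow> ('i \<Rightarrow> 'w set) \<Rightarrow> 'i set \<Rightarrow> ('i \<Rightarrow> real) \<Rightarrow> ('i \<Rightarrow> real) \<Rightarrow> 'w \<Rightarrow> real" where
  "gam X B J \<alpha> c = (\<lambda>\<omega>. \<Sum>j\<in>J. \<alpha> j * indicator (B j) \<omega> * (X j \<omega> - c j))"

definition SP :: "('w \<Rightarrow> real) \<Rightarrow> ereal" where
  "SP f = (SUP \<omega>. ereal (f \<omega>))"

definition Gset where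
  "Gset I X B P = {g. \<exists>J \<alpha> c. adm I P J \<alpha> c \<and> g = gam X B J \<alpha> c}"

lemma coherent1_alt: "coherent1 I X B P \<longleftrightarrow> (\<forall>J \<alpha> c. adm I P J \<alpha> c \<longrightarrow> SP (gam X B J \<alpha> c) \<ge> 0)"
  unfolding coherent1_def adm_def gam_def SP_def by blast

lemma coh_G: "coherent1 I X B P \<longleftrightarrow> (\<forall>g\<in>Gset I X B P. SP g \<ge> 0)"
  by (auto simp: coherent1_alt Gset_def)

lemma G_scale:
  assumes "g \<in> Gset I X B P" "(t::real) > 0"
  shows "(\<lambda>\<omega>. g \<omega> / t) \<in> Gset I X B P"
proof -
  obtain J \<alpha> c where a: "adm I P J \<alpha> c" and g: "g = gam X B J \<alpha> c"
    using assms(1) by (auto simp: Gset_def)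
  have "adm I P J (\<lambda>j. \<alpha> j / t) c"
    using a assms(2) by (auto simp: adm_def divide_nonpos_pos)
  moreover have "(\<lambda>\<omega>. g \<omega> / t) = gam X B J (\<lambda>j. \<alpha> j / t) c"
    by (auto simp: g gam_def sum_divide_distrib)
  ultimately show ?thesis by (auto simp: Gset_def)
qed

lemma G_add:
  assumes "g1 \<in> Gset I X B P" "g2 \<in> Gset I X B P"
  shows "(\<lambda>\<omega>. g1 \<omega> + g2 \<omega>) \<in> Gset I X B P"
proof -
  obtain J1 \<alpha>1 c1 where a1: "adm I P J1 \<alpha>1 c1" and g1: "g1 = gam X B J1 \<alpha>1 c1"
    using assms(1) by (auto simp: Gset_def)
  obtain J2 \<alpha>2 c2 where a2: "adm I P J2 \<alpha>2 c2" and g2: "g2 = gam X B J2 \<alpha>2 c2"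
    using assms(2) by (auto simp: Gset_def)
  define b1 where "b1 j = (if j \<in> J1 then \<alpha>1 j else 0)" for j
  define b2 where "b2 j = (if j \<in> J2 then \<alpha>2 j else 0)" for j
  define \<alpha> where "\<alpha> j = b1 j + b2 j" for j
  define c where "c j = (if \<alpha> j = 0 then (if \<bar>P j\<bar> \<noteq> \<infinity> then real_of_ereal (P j) else 0)
                         else (b1 j * c1 j + b2 j * c2 j) / \<alpha> j)" for j
  have f1: "finite J1" "finite J2" using a1 a2 by (auto simp: adm_def)
  have key: "b1 j * c1 j + b2 j * c2 j = \<alpha> j * real_of_ereal (P j)"
    if fin: "\<bar>P j\<bar> \<noteq> \<infinity>" for j
  proof -
    obtain r where r: "P j = ereal r" using fin by (cases "P j") auto
    have "j \<in> J1 \<Longrightarrow> c1 j = r" "j \<in> J2 \<Longrightarrow> c2 j = r"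
      using a1 a2 r unfolding adm_def by auto
    then show ?thesis unfolding b1_def b2_def \<alpha>_def r by (auto simp: algebra_simps)
  qed
  have zero: "b1 j = 0 \<and> b2 j = 0 \<or> c1 j = c2 j" if "\<alpha> j = 0" for j
  proof (cases "P j")
    case (real r)
    then show ?thesis using a1 a2 that unfolding adm_def b1_def b2_def \<alpha>_def
      by (cases "j \<in> J1"; cases "j \<in> J2"; force)
  next
    case PInf
    then show ?thesis using a1 a2 that unfolding adm_def b1_def b2_def \<alpha>_def
      by (cases "j \<in> J1"; cases "j \<in> J2"; force)
  next
    case MInf
    then show ?thesis using a1 a2 that unfolding adm_def b1_def b2_def \<alpha>_def
      by (cases "j \<in> J1"; cases "j \<in> J2"; force)
  qed
  have adm: "adm I P (J1 \<union> J2) \<alpha> c"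
    unfolding adm_def
  proof (intro conjI ballI impI)
    show "finite (J1 \<union> J2)" using f1 by simp
    show "J1 \<union> J2 \<subseteq> I" using a1 a2 by (auto simp: adm_def)
  next
    fix j assume j: "j \<in> J1 \<union> J2" and p: "P j = \<infinity>"
    have "j \<in> J1 \<Longrightarrow> 0 \<le> \<alpha>1 j" "j \<in> J2 \<Longrightarrow> 0 \<le> \<alpha>2 j"
      using a1 a2 p unfolding adm_def by blast+
    then show "0 \<le> \<alpha> j" unfolding b1_def b2_def \<alpha>_def by auto
  next
    fix j assume j: "j \<in> J1 \<union> J2" and p: "P j = -\<infinity>"
    have "j \<in> J1 \<Longrightarrow> \<alpha>1 j \<le> 0" "j \<in> J2 \<Longrightarrow> \<alpha>2 j \<le> 0"
      using a1 a2 p unfolding adm_def by blast+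
    then show "\<alpha> j \<le> 0" unfolding b1_def b2_def \<alpha>_def by auto
  next
    fix j assume "j \<in> J1 \<union> J2" and h: "\<bar>P j\<bar> \<noteq> \<infinity>"
    show "ereal (c j) = P j"
    proof (cases "\<alpha> j = 0")
      case True then show ?thesis using h by (auto simp: c_def)
    next
      case False then show ?thesis using h key[OF h] by (auto simp: c_def)
    qed
  qed
  have trm: "\<alpha> j * indicator (B j) \<omega> * (X j \<omega> - c j)
     = b1 j * indicator (B j) \<omega> * (X j \<omega> - c1 j) + b2 j * indicator (B j) \<omega> * (X j \<omega> - c2 j)"
    for j \<omega>
  proof (cases "\<alpha> j = 0")
    case True
    then have "b2 j = - b1 j" by (simp add: \<alpha>_def)
    then show ?thesis using zero[OF True] True by (auto simp: algebra_simps)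
  next
    case False
    then show ?thesis by (simp add: c_def field_simps \<alpha>_def)
  qed
  have s1: "(\<Sum>j\<in>J1 \<union> J2. b1 j * indicator (B j) \<omega> * (X j \<omega> - c1 j)) = g1 \<omega>" for \<omega>
    unfolding g1 gam_def
    by (rule sum.mono_neutral_cong_right) (auto simp: f1 b1_def)
  have s2: "(\<Sum>j\<in>J1 \<union> J2. b2 j * indicator (B j) \<omega> * (X j \<omega> - c2 j)) = g2 \<omega>" for \<omega>
    unfolding g2 gam_def
    by (rule sum.mono_neutral_cong_right) (auto simp: f1 b2_def)
  have "(\<lambda>\<omega>. g1 \<omega> + g2 \<omega>) = gam X B (J1 \<union> J2) \<alpha> c"
    unfolding gam_def by (auto simp: trm sum.distrib s1 s2)
  with adm show ?thesis by (auto simp: Gset_def)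
qed

lemma sum_option:
  assumes "finite J'"
  shows "(\<Sum>j\<in>J'. f j) = (if None \<in> J' then f None else 0) + (\<Sum>j\<in>Some -` J'. f (Some j))"
proof -
  have fin: "finite (Some -` J')" using assms by (simp add: finite_vimageI)
  have e: "J' = (if None \<in> J' then {None} else {}) \<union> Some ` (Some -` J')"
    by (auto; case_tac x; auto)
  have "(\<Sum>j\<in>J'. f j) = (\<Sum>j\<in>(if None \<in> J' then {None} else {}) \<union> Some ` (Some -` J'). f j)"
    using e by simp
  also have "\<dots> = (\<Sum>j\<in>(if None \<in> J' then {None} else {}). f j) + (\<Sum>j\<in>Some ` (Some -` J'). f j)"
    by (rule sum.union_disjoint) (use fin assms in auto)
  also have "(\<Sum>j\<in>Some ` (Some -` J'). f j) = (\<Sum>j\<in>Some -` J'. f (Some j))"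
    by (rule sum.reindex_cong[where l=Some]) auto
  finally show ?thesis by simp
qed

lemma ext_iff:
  "coherent1 (insert None (Some ` I)) (case_option Y X) (case_option UNIV B) (case_option p P)
   \<longleftrightarrow> (\<forall>\<alpha>0 c0. (p = \<infinity> \<longrightarrow> \<alpha>0 \<ge> 0) \<and> (p = -\<infinity> \<longrightarrow> \<alpha>0 \<le> 0) \<and> (\<bar>p\<bar> \<noteq> \<infinity> \<longrightarrow> ereal c0 = p)
        \<longrightarrow> (\<forall>g\<in>Gset I X B P. SP (\<lambda>\<omega>. \<alpha>0 * (Y \<omega> - c0) + g \<omega>) \<ge> 0))"
  (is "?L \<longleftrightarrow> ?R")
proof
  assume L: ?L
  show ?R
  proof (intro allI impI ballI)
    fix \<alpha>0 c0 :: real and g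
    assume cnd: "(p = \<infinity> \<longrightarrow> \<alpha>0 \<ge> 0) \<and> (p = -\<infinity> \<longrightarrow> \<alpha>0 \<le> 0) \<and> (\<bar>p\<bar> \<noteq> \<infinity> \<longrightarrow> ereal c0 = p)"
      and "g \<in> Gset I X B P"
    then obtain J \<alpha> c where a: "adm I P J \<alpha> c" and g: "g = gam X B J \<alpha> c"
      by (auto simp: Gset_def)
    let ?J = "insert None (Some ` J)"
    let ?a = "case_option \<alpha>0 \<alpha>" and ?c = "case_option c0 c"
    have "adm (insert None (Some ` I)) (case_option p P) ?J ?a ?c"
      using a cnd unfolding adm_def by auto
    then have "SP (gam (case_option Y X) (case_option UNIV B) ?J ?a ?c) \<ge> 0"
      using L by (simp add: coherent1_alt)
    moreover have "gam (case_option Y X) (case_option UNIV B) ?J ?a ?c = (\<lambda>\<omega>. \<alpha>0 * (Y \<omega> - c0) + g \<omega>)"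
      using a unfolding g gam_def adm_def
      by (auto simp: sum.reindex)
    ultimately show "SP (\<lambda>\<omega>. \<alpha>0 * (Y \<omega> - c0) + g \<omega>) \<ge> 0" by simp
  qed
next
  assume R: ?R
  show ?L unfolding coherent1_alt
  proof (intro allI impI)
    fix J' \<alpha>' c'
    assume a': "adm (insert None (Some ` I)) (case_option p P) J' \<alpha>' c'"
    define J where "J = Some -` J'"
    define \<alpha>0 where "\<alpha>0 = (if None \<in> J' then \<alpha>' None else 0)"
    define c0 where "c0 = (if None \<in> J' then c' None else if \<bar>p\<bar> \<noteq> \<infinity> then real_of_ereal p else 0)"
    have fin: "finite J'" using a' by (simp add: adm_def)
    have a: "adm I P J (\<lambda>j. \<alpha>' (Some j)) (\<lambda>j. c' (Some j))"
      using a' fin unfolding adm_def J_def by (auto simp: finite_vimageI)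
    have cnd: "(p = \<infinity> \<longrightarrow> \<alpha>0 \<ge> 0) \<and> (p = -\<infinity> \<longrightarrow> \<alpha>0 \<le> 0) \<and> (\<bar>p\<bar> \<noteq> \<infinity> \<longrightarrow> ereal c0 = p)"
      using a' unfolding adm_def \<alpha>0_def c0_def by (cases p) auto
    have g: "gam X B J (\<lambda>j. \<alpha>' (Some j)) (\<lambda>j. c' (Some j)) \<in> Gset I X B P"
      using a by (auto simp: Gset_def)
    have "gam (case_option Y X) (case_option UNIV B) J' \<alpha>' c'
       = (\<lambda>\<omega>. \<alpha>0 * (Y \<omega> - c0) + gam X B J (\<lambda>j. \<alpha>' (Some j)) (\<lambda>j. c' (Some j)) \<omega>)"
      unfolding gam_def
      by (subst sum_option[OF fin]) (auto simp: \<alpha>0_def c0_def J_def)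
    then show "SP (gam (case_option Y X) (case_option UNIV B) J' \<alpha>' c') \<ge> 0"
      using R cnd g by simp
  qed
qed

lemma SP_nm: "SP f \<noteq> -\<infinity>"
proof -
  have "ereal (f undefined) \<le> SP f" unfolding SP_def by (rule SUP_upper) auto
  then show ?thesis by auto
qed

lemma SP_add_const: "SP (\<lambda>\<omega>. f \<omega> + d) = SP f + ereal d"
  unfolding SP_def using SUP_ereal_add_left[of UNIV "ereal d" "\<lambda>\<omega>. ereal (f \<omega>)"]
  by simp

lemma SP_scale: "(t::real) \<ge> 0 \<Longrightarrow> SP (\<lambda>\<omega>. t * f \<omega>) = ereal t * SP f"
  unfolding SP_def using Sup_ereal_mult_left'[of UNIV t "\<lambda>\<omega>. ereal (f \<omega>)"]
  by simp

lemma SP_pos: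
  assumes "(a0::real) > 0"
  shows "SP (\<lambda>\<omega>. a0 * (Y \<omega> - c0) + g \<omega>) \<ge> 0 \<longleftrightarrow> SP (\<lambda>\<omega>. Y \<omega> + g \<omega> / a0) \<ge> ereal c0"
proof -
  have "(\<lambda>\<omega>. a0 * (Y \<omega> - c0) + g \<omega>) = (\<lambda>\<omega>. a0 * ((Y \<omega> + g \<omega> / a0) + (- c0)))"
    using assms by (auto simp: field_simps)
  then have "SP (\<lambda>\<omega>. a0 * (Y \<omega> - c0) + g \<omega>) = SP (\<lambda>\<omega>. a0 * ((Y \<omega> + g \<omega> / a0) + (- c0)))"
    by simp
  also have "\<dots> = ereal a0 * SP (\<lambda>\<omega>. (Y \<omega> + g \<omega> / a0) + (- c0))"
    by (rule SP_scale) (use assms in simp)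
  also have "SP (\<lambda>\<omega>. (Y \<omega> + g \<omega> / a0) + (- c0)) = SP (\<lambda>\<omega>. Y \<omega> + g \<omega> / a0) + ereal (-c0)"
    by (rule SP_add_const)
  finally have "SP (\<lambda>\<omega>. a0 * (Y \<omega> - c0) + g \<omega>) = ereal a0 * (SP (\<lambda>\<omega>. Y \<omega> + g \<omega> / a0) + ereal (-c0))" .
  moreover have "SP (\<lambda>\<omega>. Y \<omega> + g \<omega> / a0) \<noteq> -\<infinity>" by (rule SP_nm)
  ultimately show ?thesis using assms
    by (cases "SP (\<lambda>\<omega>. Y \<omega> + g \<omega> / a0)") (auto simp: ereal_zero_le_0_iff zero_le_mult_iff mult_le_0_iff)
qed

lemma SP_neg:
  assumes "(a0::real) < 0"
  shows "SP (\<lambda>\<omega>. a0 * (Y \<omega> - c0) + g \<omega>) \<ge> 0 \<longleftrightarrow> SP (\<lambda>\<omega>. - Y \<omega> + g \<omega> / (- a0)) \<ge> ereal (- c0)"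
proof -
  have "(\<lambda>\<omega>. a0 * (Y \<omega> - c0) + g \<omega>) = (\<lambda>\<omega>. (-a0) * ((- Y \<omega> + g \<omega> / (-a0)) + c0))"
    using assms by (auto simp: field_simps)
  then have "SP (\<lambda>\<omega>. a0 * (Y \<omega> - c0) + g \<omega>) = SP (\<lambda>\<omega>. (-a0) * ((- Y \<omega> + g \<omega> / (-a0)) + c0))"
    by simp
  also have "\<dots> = ereal (-a0) * SP (\<lambda>\<omega>. (- Y \<omega> + g \<omega> / (-a0)) + c0)"
    by (rule SP_scale) (use assms in simp)
  also have "SP (\<lambda>\<omega>. (- Y \<omega> + g \<omega> / (-a0)) + c0) = SP (\<lambda>\<omega>. - Y \<omega> + g \<omega> / (-a0)) + ereal c0"
    by (rule SP_add_const)
  finally have "SP (\<lambda>\<omega>. a0 * (Y \<omega> - c0) + g \<omega>) = ereal (-a0) * (SP (\<lambda>\<omega>. - Y \<omega> + g \<omega> / (-a0)) + ereal c0)" .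
  moreover have "SP (\<lambda>\<omega>. - Y \<omega> + g \<omega> / (-a0)) \<noteq> -\<infinity>" by (rule SP_nm)
  ultimately show ?thesis using assms
    by (cases "SP (\<lambda>\<omega>. - Y \<omega> + g \<omega> / (-a0))") (auto simp: ereal_zero_le_0_iff zero_le_mult_iff mult_le_0_iff)
qed

lemma SP_sum_le: "SP (\<lambda>\<omega>. f \<omega> + h \<omega>) \<le> SP f + SP h"
  unfolding SP_def
proof (rule SUP_least)
  fix \<omega>
  have "ereal (f \<omega>) + ereal (h \<omega>) \<le> (SUP \<omega>. ereal (f \<omega>)) + (SUP \<omega>. ereal (h \<omega>))"
    by (intro add_mono SUP_upper) auto
  then show "ereal (f \<omega> + h \<omega>) \<le> (SUP \<omega>. ereal (f \<omega>)) + (SUP \<omega>. ereal (h \<omega>))" by simp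
qed

lemma ereal_inf_iff: "(x::ereal) = \<infinity> \<longleftrightarrow> (\<forall>r. ereal r \<le> x)"
proof (cases x)
  case (real s) then show ?thesis by (auto intro: exI[of _ "s+1"])
qed auto

lemma ereal_minf_iff: "(x::ereal) = -\<infinity> \<longleftrightarrow> (\<forall>r. x \<le> ereal r)"
proof (cases x)
  case (real s) then show ?thesis by (auto intro: exI[of _ "s-1"])
qed auto

theorem lemma7p1:
  fixes I :: "'i set" and X :: "'i \<Rightarrow> 'w \<Rightarrow> real" and B :: "'i \<Rightarrow> 'w set"
    and P :: "'i \<Rightarrow> ereal" and Y :: "'w \<Rightarrow> real"
  assumes nonempty: "\<forall>i\<in>I. B i \<noteq> {}"
    and coh: "coherent1 I X B P"
  shows "\<exists>a b :: ereal. a \<le> b \<and>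
           (\<forall>p :: ereal.
              coherent1 (insert None (Some ` I)) (case_option Y X) (case_option UNIV B)
                        (case_option p P)
              \<longleftrightarrow> p \<in> {a..b})"
proof -
  define G where "G = Gset I X B P"
  define U where "U g = SP (\<lambda>\<omega>. Y \<omega> + g \<omega>)" for g :: "'w \<Rightarrow> real"
  define L where "L g = SP (\<lambda>\<omega>. - Y \<omega> + g \<omega>)" for g :: "'w \<Rightarrow> real"
  define b where "b = (INF g\<in>G. U g)"
  define a where "a = (SUP g\<in>G. - L g)"
  define Q where "Q \<alpha>0 c0 \<longleftrightarrow> (\<forall>g\<in>G. SP (\<lambda>\<omega>. \<alpha>0 * (Y \<omega> - c0) + g \<omega>) \<ge> 0)" for \<alpha>0 c0 :: real
  have cohG: "\<forall>g\<in>G. SP g \<ge> 0" using coh by (simp add: coh_G G_def)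
  have Q0: "Q 0 c0" for c0 using cohG by (simp add: Q_def)
  have Qpos: "(\<forall>\<alpha>0>0. Q \<alpha>0 c0) \<longleftrightarrow> (\<forall>g\<in>G. ereal c0 \<le> U g)" for c0
  proof
    assume h: "\<forall>\<alpha>0>0. Q \<alpha>0 c0"
    show "\<forall>g\<in>G. ereal c0 \<le> U g"
    proof
      fix g assume "g \<in> G"
      moreover have "Q 1 c0" using h by simp
      ultimately have "SP (\<lambda>\<omega>. 1 * (Y \<omega> - c0) + g \<omega>) \<ge> 0" unfolding Q_def by blast
      then show "ereal c0 \<le> U g" using SP_pos[of 1 Y c0 g] by (simp add: U_def)
    qed
  next
    assume h: "\<forall>g\<in>G. ereal c0 \<le> U g"
    show "\<forall>\<alpha>0>0. Q \<alpha>0 c0"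
    proof (intro allI impI)
      fix \<alpha>0 :: real assume a0: "\<alpha>0 > 0"
      show "Q \<alpha>0 c0" unfolding Q_def
      proof
        fix g assume "g \<in> G"
        then have "(\<lambda>\<omega>. g \<omega> / \<alpha>0) \<in> G" using G_scale a0 by (simp add: G_def)
        then have "ereal c0 \<le> U (\<lambda>\<omega>. g \<omega> / \<alpha>0)" using h by blast
        then show "SP (\<lambda>\<omega>. \<alpha>0 * (Y \<omega> - c0) + g \<omega>) \<ge> 0"
          using SP_pos[OF a0, of Y c0 g] by (simp add: U_def)
      qed
    qed
  qed
  have Qneg: "(\<forall>\<alpha>0<0. Q \<alpha>0 c0) \<longleftrightarrow> (\<forall>g\<in>G. ereal (- c0) \<le> L g)" for c0
  proof
    assume h: "\<forall>\<alpha>0<0. Q \<alpha>0 c0"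
    show "\<forall>g\<in>G. ereal (- c0) \<le> L g"
    proof
      fix g assume "g \<in> G"
      moreover have "Q (-1) c0" using h by simp
      ultimately have "SP (\<lambda>\<omega>. (-1) * (Y \<omega> - c0) + g \<omega>) \<ge> 0" unfolding Q_def by blast
      then show "ereal (- c0) \<le> L g" using SP_neg[of "-1" Y c0 g] by (simp add: L_def)
    qed
  next
    assume h: "\<forall>g\<in>G. ereal (- c0) \<le> L g"
    show "\<forall>\<alpha>0<0. Q \<alpha>0 c0"
    proof (intro allI impI)
      fix \<alpha>0 :: real assume a0: "\<alpha>0 < 0"
      show "Q \<alpha>0 c0" unfolding Q_def
      proof
        fix g assume "g \<in> G"
        then have "(\<lambda>\<omega>. g \<omega> / (- \<alpha>0)) \<in> G" using G_scale[of g I X B P "- \<alpha>0"] a0 by (simp only: G_def)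
        then have "ereal (- c0) \<le> L (\<lambda>\<omega>. g \<omega> / (- \<alpha>0))" using h by blast
        then show "SP (\<lambda>\<omega>. \<alpha>0 * (Y \<omega> - c0) + g \<omega>) \<ge> 0"
          using SP_neg[OF a0, of Y c0 g] by (simp add: L_def)
      qed
    qed
  qed
  have Qall: "(\<forall>\<alpha>0. Q \<alpha>0 c0) \<longleftrightarrow> (\<forall>\<alpha>0>0. Q \<alpha>0 c0) \<and> (\<forall>\<alpha>0<0. Q \<alpha>0 c0)" for c0
    using Q0 by (metis linorder_neqE_linordered_idom)
  have Qge: "(\<forall>\<alpha>0\<ge>0. Q \<alpha>0 c0) \<longleftrightarrow> (\<forall>\<alpha>0>0. Q \<alpha>0 c0)" for c0
    using Q0 by (metis order_le_less)
  have Qle: "(\<forall>\<alpha>0\<le>0. Q \<alpha>0 c0) \<longleftrightarrow> (\<forall>\<alpha>0<0. Q \<alpha>0 c0)" for c0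
    using Q0 by (metis order_le_less)
  have Ub: "ereal r \<le> b \<longleftrightarrow> (\<forall>g\<in>G. ereal r \<le> U g)" for r
    by (simp add: b_def le_INF_iff)
  have La: "a \<le> ereal r \<longleftrightarrow> (\<forall>g\<in>G. ereal (- r) \<le> L g)" for r
    by (simp add: a_def SUP_le_iff ereal_uminus_le_reorder)
  have ab: "a \<le> b"
    unfolding a_def b_def
  proof (intro SUP_least INF_greatest)
    fix g1 g2 assume g1: "g1 \<in> G" and g2: "g2 \<in> G"
    then have "(\<lambda>\<omega>. g1 \<omega> + g2 \<omega>) \<in> G" using G_add by (simp add: G_def)
    then have "0 \<le> SP (\<lambda>\<omega>. g1 \<omega> + g2 \<omega>)" using cohG by blast
    also have "(\<lambda>\<omega>. g1 \<omega> + g2 \<omega>) = (\<lambda>\<omega>. (Y \<omega> + g2 \<omega>) + (- Y \<omega> + g1 \<omega>))" by auto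
    also have "SP \<dots> \<le> U g2 + L g1" unfolding U_def L_def by (rule SP_sum_le)
    finally have "0 \<le> U g2 + L g1" .
    moreover have "L g1 \<noteq> -\<infinity>" by (simp add: L_def SP_nm)
    ultimately show "- L g1 \<le> U g2"
      by (cases "L g1"; cases "U g2") auto
  qed
  have main: "coherent1 (insert None (Some ` I)) (case_option Y X) (case_option UNIV B)
                        (case_option p P) \<longleftrightarrow> p \<in> {a..b}" for p
  proof -
    have E: "coherent1 (insert None (Some ` I)) (case_option Y X) (case_option UNIV B)
                        (case_option p P) \<longleftrightarrow>
         (\<forall>\<alpha>0 c0. (p = \<infinity> \<longrightarrow> \<alpha>0 \<ge> 0) \<and> (p = -\<infinity> \<longrightarrow> \<alpha>0 \<le> 0) \<and> (\<bar>p\<bar> \<noteq> \<infinity> \<longrightarrow> ereal c0 = p)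
           \<longrightarrow> Q \<alpha>0 c0)"
      by (simp add: ext_iff Q_def G_def)
    show ?thesis
    proof (cases p)
      case (real r)
      have "coherent1 (insert None (Some ` I)) (case_option Y X) (case_option UNIV B)
                        (case_option p P) \<longleftrightarrow> (\<forall>\<alpha>0. Q \<alpha>0 r)"
        unfolding E by (auto simp: real)
      also have "\<dots> \<longleftrightarrow> a \<le> ereal r \<and> ereal r \<le> b"
        by (simp add: Qall Qpos Qneg Ub La) blast
      finally show ?thesis using real by simp
    next
      case PInf
      have "coherent1 (insert None (Some ` I)) (case_option Y X) (case_option UNIV B)
                        (case_option p P) \<longleftrightarrow> (\<forall>c0. \<forall>\<alpha>0\<ge>0. Q \<alpha>0 c0)"
        unfolding E by (auto simp: PInf)
      also have "\<dots> \<longleftrightarrow> (\<forall>c0. ereal c0 \<le> b)"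
        by (simp add: Qge Qpos Ub)
      also have "\<dots> \<longleftrightarrow> b = \<infinity>" by (simp add: ereal_inf_iff)
      finally show ?thesis using PInf by auto
    next
      case MInf
      have "coherent1 (insert None (Some ` I)) (case_option Y X) (case_option UNIV B)
                        (case_option p P) \<longleftrightarrow> (\<forall>c0. \<forall>\<alpha>0\<le>0. Q \<alpha>0 c0)"
        unfolding E by (auto simp: MInf)
      also have "\<dots> \<longleftrightarrow> (\<forall>c0. a \<le> ereal (- c0))"
        by (simp add: Qle Qneg La) (metis minus_minus)
      also have "\<dots> \<longleftrightarrow> (\<forall>r. a \<le> ereal r)" by (metis minus_minus)
      also have "\<dots> \<longleftrightarrow> a = -\<infinity>" by (simp add: ereal_minf_iff)
      finally show ?thesis using MInf by auto
    qed
  qed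
  show ?thesis using ab main by blast
qed

end
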